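(* Suppose $X$ has well-defined scattered $\Pi_1$-products. Let $A$ be a homotopy cut-set for paths $\alpha,\beta:[0,1]\to X$ such that $\alpha|_{[a,b]}\simeq\beta|_{[a,b]}$ for all $a,b\in A\cap(0,1)$ with $a<b$. Then $\alpha\simeq\beta$.
   Context: $\simeq$ is path-homotopy. For paths $\alpha,\beta:[s,t]\to X$, a set $A\subseteq[s,t]$ is a homotopy cut-set for $\alpha,\beta$ if $A$ is closed, nowhere dense, contains $\{s,t\}$, $\alpha|_A=\beta|_A$, and $\alpha|_{[a,b]}\simeq\beta|_{[a,b]}$ for every component $(a,b)$ of $[s,t]\setminus A$. $X$ has well-defined scattered $\Pi_1$-products if any two paths $[0,1]\to X$ that admit a scattered homotopy cut-set (one in which every non-empty subset has an isolated point) are path-homotopic. *)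

theory Defs
  imports "HOL-Analysis.Analysis"
begin

definition path_homotopic_on :: "'a topology \<Rightarrow> real \<Rightarrow> real \<Rightarrow> (real \<Rightarrow> 'a) \<Rightarrow> (real \<Rightarrow> 'a) \<Rightarrow> bool" where
  "path_homotopic_on X s t \<alpha> \<beta> \<longleftrightarrow>
     homotopic_with (\<lambda>h. h s = \<alpha> s \<and> h t = \<alpha> t)
       (subtopology euclideanreal {s..t}) X \<alpha> \<beta>"

definition homotopy_cut_set :: "'a topology \<Rightarrow> real \<Rightarrow> real \<Rightarrow> (real \<Rightarrow> 'a) \<Rightarrow> (real \<Rightarrow> 'a) \<Rightarrow> real set \<Rightarrow> bool" where
  "homotopy_cut_set X s t \<alpha> \<beta> A \<longleftrightarrow>
     A \<subseteq> {s..t} \<and> closed A \<and> interior (closure A) = {} \<and> s \<in> A \<and> t \<in> A \<and>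
     (\<forall>x\<in>A. \<alpha> x = \<beta> x) \<and>
     (\<forall>a b. {a<..<b} \<in> components ({s..t} - A) \<longrightarrow> path_homotopic_on X a b \<alpha> \<beta>)"

definition scattered_set :: "real set \<Rightarrow> bool" where
  "scattered_set A \<longleftrightarrow> (\<forall>B\<subseteq>A. B \<noteq> {} \<longrightarrow> (\<exists>x\<in>B. \<not> x islimpt B))"

definition well_defined_scattered_products :: "'a topology \<Rightarrow> bool" where
  "well_defined_scattered_products X \<longleftrightarrow>
     (\<forall>\<alpha> \<beta>. pathin X \<alpha> \<and> pathin X \<beta> \<and>
        (\<exists>A. homotopy_cut_set X 0 1 \<alpha> \<beta> A \<and> scattered_set A)
        \<longrightarrow> path_homotopic_on X 0 1 \<alpha> \<beta>)"

end

theory Submission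
  imports Defs
begin

lemma comp_gap:
  fixes A :: "real set"
  assumes "c < d" "c \<in> A" "d \<in> A" "{c<..<d} \<inter> A = {}" "0 \<le> c" "d \<le> 1"
  shows "{c<..<d} \<in> components ({0..1} - A)"
  unfolding in_components_maximal
proof (intro conjI allI impI)
  show "{c<..<d} \<noteq> {}" using assms by auto
  show "{c<..<d} \<subseteq> {0..1} - A" using assms by auto
  show "connected {c<..<d}" by simp
  fix D assume D: "D \<noteq> {} \<and> {c<..<d} \<subseteq> D \<and> D \<subseteq> {0..1} - A \<and> connected D"
  have "(c+d)/2 \<in> {c<..<d}" using assms by auto
  hence y: "(c+d)/2 \<in> D" using D by blast
  show "D = {c<..<d}"
  proof
    show "D \<subseteq> {c<..<d}"
    proof
      fix x assume x: "x \<in> D"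
      show "x \<in> {c<..<d}"
      proof (rule ccontr)
        assume "x \<notin> {c<..<d}"
        hence "x \<le> c \<or> x \<ge> d" by auto
        thus False
        proof
          assume "x \<le> c"
          hence "{x..(c+d)/2} \<subseteq> D" using connected_contains_Icc D x y by blast
          hence "c \<in> D" using \<open>x \<le> c\<close> assms by auto
          thus False using D assms by auto
        next
          assume "x \<ge> d"
          hence "{(c+d)/2..x} \<subseteq> D" using connected_contains_Icc D x y by blast
          hence "d \<in> D" using \<open>x \<ge> d\<close> assms by auto
          thus False using D assms by auto
        qed
      qed
    qed
  qed (use D in auto)
qed

lemma comp_ends:
  fixes B :: "real set"
  assumes "{a<..<b} \<in> components ({0..1} - B)" "0 \<in> B" "1 \<in> B"
  shows "a < b \<and> a \<in> B \<and> b \<in> B \<and> {a<..<b} \<inter> B = {} \<and> 0 \<le> a \<and> b \<le> 1"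
proof -
  note M = assms(1)[unfolded in_components_maximal]
  have ab: "a < b" using M by auto
  have sub: "{a<..<b} \<subseteq> {0..1} - B" using M by auto
  have a0: "0 \<le> a"
  proof (rule ccontr)
    assume "\<not> 0 \<le> a"
    hence "max a (-1) < 0" by simp
    let ?x = "(a + min b 0)/2"
    have "b > 0"
    proof (rule ccontr)
      assume "\<not> b > 0"
      hence "(a+b)/2 \<in> {a<..<b}" "(a+b)/2 < 0" using ab by auto
      hence "(a+b)/2 \<in> {0..1}" using sub by blast
      thus False using \<open>(a+b)/2 < 0\<close> by simp
    qed
    hence "?x \<in> {a<..<b}" "?x < 0" using ab \<open>\<not> 0 \<le> a\<close> by auto
    hence "?x \<in> {0..1}" using sub by blast
    thus False using \<open>?x < 0\<close> by simp
  qed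
  have b1: "b \<le> 1"
  proof (rule ccontr)
    assume nb: "\<not> b \<le> 1"
    have "a < 1"
    proof (rule ccontr)
      assume "\<not> a < 1"
      hence "(a+b)/2 \<in> {a<..<b}" "(a+b)/2 > 1" using ab by auto
      hence "(a+b)/2 \<in> {0..1}" using sub by blast
      thus False using \<open>(a+b)/2 > 1\<close> by simp
    qed
    let ?x = "(max a 1 + b)/2"
    have "?x \<in> {a<..<b}" "?x > 1" using ab nb \<open>a<1\<close> by auto
    hence "?x \<in> {0..1}" using sub by blast
    thus False using \<open>?x > 1\<close> by simp
  qed
  have aB: "a \<in> B"
  proof (rule ccontr)
    assume "a \<notin> B"
    moreover have "{a..<b} = insert a {a<..<b}" using ab by auto
    moreover have "connected {a..<b}" by simp
    ultimately have "{a..<b} \<noteq> {} \<and> {a<..<b} \<subseteq> {a..<b} \<and> {a..<b} \<subseteq> {0..1} - B \<and> connected {a..<b}"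
      using sub a0 b1 ab by auto
    hence "{a..<b} = {a<..<b}" using M by blast
    thus False using ab by (metis atLeastLessThan_iff greaterThanLessThan_iff order_refl less_irrefl)
  qed
  have bB: "b \<in> B"
  proof (rule ccontr)
    assume "b \<notin> B"
    moreover have "{a<..b} = insert b {a<..<b}" using ab by auto
    moreover have "connected {a<..b}" by simp
    ultimately have "{a<..b} \<noteq> {} \<and> {a<..<b} \<subseteq> {a<..b} \<and> {a<..b} \<subseteq> {0..1} - B \<and> connected {a<..b}"
      using sub a0 b1 ab by auto
    hence "{a<..b} = {a<..<b}" using M by blast
    thus False using ab by (metis greaterThanAtMost_iff greaterThanLessThan_iff order_refl less_irrefl)
  qed
  show ?thesis using ab aB bB sub a0 b1 by auto
qed

lemma not_limpt_seq:
  fixes p :: "nat \<Rightarrow> real"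
  assumes "p \<longlonglongrightarrow> m" "x \<noteq> m"
  shows "\<not> x islimpt range p"
proof
  assume L: "x islimpt range p"
  define e where "e = dist x m / 2"
  have e: "e > 0" using assms(2) by (simp add: e_def)
  obtain N where N: "\<And>n. n \<ge> N \<Longrightarrow> dist (p n) m < e"
    using assms(1) e unfolding LIMSEQ_def by (meson less_eq_nat.simps order_trans) 
  have "{..<N} \<union> {N..} = (UNIV::nat set)" by auto
  hence "range p \<subseteq> p ` {..<N} \<union> p ` {N..}" by (metis image_Un order_refl)
  hence "x islimpt (p ` {..<N} \<union> p ` {N..})" using L islimpt_subset by blast
  hence "x islimpt p ` {N..}" using islimpt_Un islimpt_finite by blast
  then obtain y where "y \<in> p ` {N..}" "y \<noteq> x" "dist y x < e"
    using e unfolding islimpt_approachable by blast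
  then obtain n where "n \<ge> N" "dist (p n) x < e" by auto
  with N[of n] have "dist x m < 2*e" by (metis dist_commute dist_triangle_less_add mult_2)
  thus False using e_def by simp
qed

theorem mainTheorem13:
  fixes X :: "'a topology" and \<alpha> \<beta> :: "real \<Rightarrow> 'a" and A :: "real set"
  assumes "well_defined_scattered_products X"
    and "pathin X \<alpha>" and "pathin X \<beta>"
    and "homotopy_cut_set X 0 1 \<alpha> \<beta> A"
    and "\<forall>a\<in>A \<inter> {0<..<1}. \<forall>b\<in>A \<inter> {0<..<1}. a < b \<longrightarrow> path_homotopic_on X a b \<alpha> \<beta>"
  shows "path_homotopic_on X 0 1 \<alpha> \<beta>"
proof -
  note H = assms(4)[unfolded homotopy_cut_set_def]
  have Asub: "A \<subseteq> {0..1}" and Acl: "closed A" and Aint: "interior (closure A) = {}"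
    and A0: "0 \<in> A" and A1: "1 \<in> A" and Aeq: "\<forall>x\<in>A. \<alpha> x = \<beta> x"
    and Acomp: "\<And>a b. {a<..<b} \<in> components ({0..1} - A) \<Longrightarrow> path_homotopic_on X a b \<alpha> \<beta>"
    using H by auto
  define S where "S = A \<inter> {0<..<1}"
  show ?thesis
  proof (cases "S = {}")
    case True
    hence "{0<..<1} \<inter> A = {}" unfolding S_def by auto
    hence "{0<..<1} \<in> components ({0..1} - A)" using comp_gap[of 0 1 A] A0 A1 by simp
    thus ?thesis using Acomp by blast
  next
    case False
    have bb: "bdd_below S" "bdd_above S" unfolding S_def by (auto intro!: bdd_belowI bdd_aboveI)
    define m where "m = Inf S"
    define M where "M = Sup S"
    have "\<forall>n. \<exists>x\<in>S. x < m + inverse (real (Suc n))"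
      using cInf_less_iff[OF False bb(1)] unfolding m_def by (metis less_add_same_cancel1 positive_imp_inverse_positive of_nat_0_less_iff zero_less_Suc)
    then obtain p where p: "\<And>n. p n \<in> S" "\<And>n. p n < m + inverse (real (Suc n))" by metis
    have "\<forall>n. \<exists>x\<in>S. M + - inverse (real (Suc n)) < x"
      using less_cSup_iff[OF False bb(2)] unfolding M_def
      by (metis add.right_neutral add_less_cancel_left neg_less_0_iff_less positive_imp_inverse_positive of_nat_0_less_iff zero_less_Suc)
    then obtain q where q: "\<And>n. q n \<in> S" "\<And>n. M + - inverse (real (Suc n)) < q n" by metis
    have mle: "\<And>x. x \<in> S \<Longrightarrow> m \<le> x" unfolding m_def using bb(1) by (simp add: cInf_lower)
    have Mge: "\<And>x. x \<in> S \<Longrightarrow> x \<le> M" unfolding M_def using bb(2) by (simp add: cSup_upper)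
    have plim: "p \<longlonglongrightarrow> m"
      by (rule tendsto_sandwich[OF _ _ tendsto_const LIMSEQ_inverse_real_of_nat_add])
         (use p mle in \<open>auto intro!: always_eventually less_imp_le\<close>)
    have qlim: "q \<longlonglongrightarrow> M"
      by (rule tendsto_sandwich[OF _ _ LIMSEQ_inverse_real_of_nat_add_minus tendsto_const])
         (use q Mge in \<open>auto intro!: always_eventually less_imp_le\<close>)
    have pS: "\<And>n. p n \<in> A" "\<And>n. 0 < p n" "\<And>n. p n < 1" using p(1) unfolding S_def by auto
    have qS: "\<And>n. q n \<in> A" "\<And>n. 0 < q n" "\<And>n. q n < 1" using q(1) unfolding S_def by auto
    have mA: "m \<in> A" using closed_sequentially[OF Acl _ plim] pS by auto
    have MA: "M \<in> A" using closed_sequentially[OF Acl _ qlim] qS by auto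
    have m0: "0 \<le> m" unfolding m_def using False by (intro cInf_greatest) (auto simp: S_def)
    have m1: "m < 1" using mle[OF p(1)[of 0]] pS(3)[of 0] by linarith
    have M0: "0 < M" using Mge[OF q(1)[of 0]] qS(2)[of 0] by linarith
    have M1: "M \<le> 1" unfolding M_def using False by (intro cSup_least) (auto simp: S_def)
    have mM: "m \<le> M" using mle[OF p(1)[of 0]] Mge[OF p(1)[of 0]] by linarith
    define B where "B = {0,1,m,M} \<union> (range p \<union> range q)"
    have BA: "B \<subseteq> A" unfolding B_def using A0 A1 mA MA pS qS by auto
    have B01: "B \<subseteq> {0..1}" using BA Asub by auto
    have lim: "x \<in> {m,M}" if "x islimpt B" for x
    proof (rule ccontr)
      assume "x \<notin> {m,M}"
      hence "\<not> x islimpt range p" "\<not> x islimpt range q"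
        using not_limpt_seq[OF plim] not_limpt_seq[OF qlim] by auto
      moreover have "\<not> x islimpt {0,1,m,M}" by (rule islimpt_finite) simp
      ultimately show False using that unfolding B_def islimpt_Un by blast
    qed
    have Bcl: "closed B" unfolding closed_limpt using lim unfolding B_def by auto
    have Bsc: "scattered_set B" unfolding scattered_set_def
    proof (intro allI impI)
      fix C assume C: "C \<subseteq> B" "C \<noteq> {}"
      show "\<exists>x\<in>C. \<not> x islimpt C"
      proof (cases "C \<subseteq> {m,M}")
        case True
        hence "finite C" using finite_subset by blast
        thus ?thesis using C islimpt_finite by blast
      next
        case False
        then obtain x where "x \<in> C" "x \<notin> {m,M}" by blast
        thus ?thesis using lim islimpt_subset C(1) by blast
      qed
    qed
    have Bint: "interior (closure B) = {}"
    proof -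
      have "interior (closure B) \<subseteq> interior (closure A)"
        using BA by (simp add: closure_mono interior_mono)
      thus ?thesis using Aint by auto
    qed
    have Bge: "\<And>x. x \<in> B \<Longrightarrow> x \<noteq> 0 \<Longrightarrow> m \<le> x"
      unfolding B_def using m1 mM mle p(1) q(1) by auto
    have Ble: "\<And>x. x \<in> B \<Longrightarrow> x \<noteq> 1 \<Longrightarrow> x \<le> M"
      unfolding B_def using M0 mM Mge p(1) q(1) by auto
    have gaps: "path_homotopic_on X a b \<alpha> \<beta>" if ab: "{a<..<b} \<in> components ({0..1} - B)" for a b
    proof -
      have "0 \<in> B" "1 \<in> B" unfolding B_def by auto
      from comp_ends[OF ab this] have E: "a < b" "a \<in> B" "b \<in> B" "{a<..<b} \<inter> B = {}" "0 \<le> a" "b \<le> 1"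
        by auto
      show ?thesis
      proof (cases "a = 0")
        case a0: True
        show ?thesis
        proof (cases "m = 0")
          case True
          have "eventually (\<lambda>n. p n < b) sequentially"
            using order_tendstoD(2)[OF plim] E a0 True by auto
          then obtain n where "p n < b" by (meson eventually_sequentially order_refl)
          moreover have "p n \<in> B" unfolding B_def by auto
          ultimately show ?thesis using E(4) pS(2)[of n] a0 by auto
        next
          case False
          hence "m \<in> B" "0 < m" using m0 unfolding B_def by auto
          hence "b \<le> m" using E a0 by (meson disjoint_iff greaterThanLessThan_iff not_le)
          moreover have "m \<le> b" using Bge E a0 by auto
          ultimately have bm: "b = m" by simp
          have "{0<..<m} \<inter> A = {}"
            using mle m1 unfolding S_def by fastforce
          hence "{0<..<m} \<in> components ({0..1} - A)" using comp_gap[of 0 m A] A0 mA \<open>0<m\<close> m1 by simp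
          thus ?thesis using Acomp a0 bm by blast
        qed
      next
        case an0: False
        show ?thesis
        proof (cases "b = 1")
          case b1: True
          show ?thesis
          proof (cases "M = 1")
            case True
            have "eventually (\<lambda>n. a < q n) sequentially"
              using order_tendstoD(1)[OF qlim] E b1 True by auto
            then obtain n where "a < q n" by (meson eventually_sequentially order_refl)
            moreover have "q n \<in> B" unfolding B_def by auto
            ultimately show ?thesis using E(4) qS(3)[of n] b1 by auto
          next
            case False
            hence "M \<in> B" "M < 1" using M1 unfolding B_def by auto
            hence "M \<le> a" using E b1 by (meson disjoint_iff greaterThanLessThan_iff not_le)
            moreover have "a \<le> M" using Ble E b1 by auto
            ultimately have aM: "a = M" by simp
            have "{M<..<1} \<inter> A = {}"
              using Mge M0 unfolding S_def by fastforce
            hence "{M<..<1} \<in> components ({0..1} - A)" using comp_gap[of M 1 A] A1 MA \<open>M<1\<close> M0 by simp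
            thus ?thesis using Acomp b1 aM by blast
          qed
        next
          case False
          hence "a \<in> A \<inter> {0<..<1}" "b \<in> A \<inter> {0<..<1}" using E an0 BA by auto
          thus ?thesis using assms(5) E(1) by blast
        qed
      qed
    qed
    have "homotopy_cut_set X 0 1 \<alpha> \<beta> B"
      unfolding homotopy_cut_set_def using B01 Bcl Bint BA Aeq gaps unfolding B_def by auto
    thus ?thesis using assms(1-3) Bsc unfolding well_defined_scattered_products_def by blast
  qed
qed

end
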